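(* There exists a (greedy) algorithm which, given any Hierarchical Correlation Clustering instance on $n$ data points, returns an HC tree $T_1$ satisfying \[hcc_G(T_1)\ge \tfrac13(n-2)\sum_{i<j}w^s_{ij}+\tfrac23 n\sum_{i<j}w^d_{ij}.\]
   Context: An HC tree on $V$ ($|V|=n$) is a rooted tree whose leaves are in bijection with $V$; $|T_{ij}|$ is the number of leaves of the subtree rooted at the lowest common ancestor of $i$ and $j$. Each pair $i<j$ has a similarity weight $w^s_{ij}\ge0$ and a dissimilarity weight $w^d_{ij}\ge0$, and $hcc_G(T)=\sum_{i<j}w^s_{ij}(n-|T_{ij}|)+\sum_{i<j}w^d_{ij}|T_{ij}|$. *)

theory Defs
  imports Complex_Main
begin

datatype 'a hctree = Leaf 'a | Node "'a hctree list"

fun leaves :: "'a hctree \<Rightarrow> 'a list" where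
  "leaves (Leaf x) = [x]"
| "leaves (Node ts) = concat (map leaves ts)"

fun subtrees :: "'a hctree \<Rightarrow> 'a hctree set" where
  "subtrees (Leaf x) = {Leaf x}"
| "subtrees (Node ts) = insert (Node ts) (\<Union>t\<in>set ts. subtrees t)"

text \<open>Every internal node has at least one child (so every leaf of the tree is a labelled leaf).\<close>
fun wf_tree :: "'a hctree \<Rightarrow> bool" where
  "wf_tree (Leaf x) = True"
| "wf_tree (Node ts) = (ts \<noteq> [] \<and> (\<forall>t\<in>set ts. wf_tree t))"

definition is_hc_tree :: "'a set \<Rightarrow> 'a hctree \<Rightarrow> bool" where
  "is_hc_tree V T \<longleftrightarrow> wf_tree T \<and> distinct (leaves T) \<and> set (leaves T) = V"

text \<open>|T_ij|: number of leaves of the subtree rooted at the lowest common ancestor of i and j,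
  i.e. the smallest subtree containing both i and j.\<close>
definition lca_size :: "'a hctree \<Rightarrow> 'a \<Rightarrow> 'a \<Rightarrow> nat" where
  "lca_size T i j = Min {length (leaves S) | S. S \<in> subtrees T \<and> i \<in> set (leaves S) \<and> j \<in> set (leaves S)}"

definition pairs :: "nat \<Rightarrow> (nat \<times> nat) set" where
  "pairs n = {(i, j). i < j \<and> j < n}"

definition hcc :: "nat \<Rightarrow> (nat \<Rightarrow> nat \<Rightarrow> real) \<Rightarrow> (nat \<Rightarrow> nat \<Rightarrow> real) \<Rightarrow> nat hctree \<Rightarrow> real" where
  "hcc n ws wd T =
     (\<Sum>(i, j)\<in>pairs n. ws i j * (real n - real (lca_size T i j)))
   + (\<Sum>(i, j)\<in>pairs n. wd i j * real (lca_size T i j))"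

end

theory Submission
  imports Defs
begin

lemma subtree_self: "T \<in> subtrees T"
  by (cases T) auto

lemma subtree_leaves: "S \<in> subtrees T \<Longrightarrow> set (leaves S) \<subseteq> set (leaves T) \<and> length (leaves S) \<le> length (leaves T)"
proof (induction T arbitrary: S)
  case (Leaf x)
  then show ?case by simp
next
  case (Node ts)
  show ?case
  proof (cases "S = Node ts")
    case True then show ?thesis by simp
  next
    case False
    then obtain t where t: "t \<in> set ts" "S \<in> subtrees t" using Node.prems by auto
    have h: "set (leaves S) \<subseteq> set (leaves t) \<and> length (leaves S) \<le> length (leaves t)"
      using Node.IH t by blast
    have "length (leaves t) \<le> sum_list (map length (map leaves ts))"
      using t(1) by (intro member_le_sum_list) auto
    then show ?thesis using h t(1) by (auto simp: length_concat)
  qed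
qed

lemma finite_subtrees: "finite (subtrees T)"
  by (induction T) auto

lemma finite_lca_set: "finite {length (leaves S) |S. S \<in> subtrees T \<and> i \<in> set (leaves S) \<and> j \<in> set (leaves S)}"
proof -
  have "{length (leaves S) |S. S \<in> subtrees T \<and> i \<in> set (leaves S) \<and> j \<in> set (leaves S)} \<subseteq> (\<lambda>S. length (leaves S)) ` subtrees T"
    by auto
  then show ?thesis using finite_subtrees finite_subset by blast
qed

lemma lca_inner:
  assumes "i \<in> set (leaves T')" "j \<in> set (leaves T')" "v \<notin> set (leaves T')"
  shows "lca_size (Node [Leaf v, T']) i j = lca_size T' i j"
proof -
  let ?A = "{length (leaves S) |S. S \<in> subtrees T' \<and> i \<in> set (leaves S) \<and> j \<in> set (leaves S)}"
  have fin: "finite ?A" by (rule finite_lca_set)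
  have ne: "length (leaves T') \<in> ?A" using assms subtree_self by blast
  have m: "lca_size T' i j \<in> ?A" unfolding lca_size_def using fin ne Min_in by blast
  have le: "\<And>y. y \<in> ?A \<Longrightarrow> lca_size T' i j \<le> y" unfolding lca_size_def using fin Min_le by blast
  show ?thesis unfolding lca_size_def[of "Node [Leaf v, T']"]
  proof (rule Min_eqI)
    show "finite {length (leaves S) |S. S \<in> subtrees (Node [Leaf v, T']) \<and> i \<in> set (leaves S) \<and> j \<in> set (leaves S)}"
      by (rule finite_lca_set)
  next
    fix y assume "y \<in> {length (leaves S) |S. S \<in> subtrees (Node [Leaf v, T']) \<and> i \<in> set (leaves S) \<and> j \<in> set (leaves S)}"
    then obtain S where S: "y = length (leaves S)" "S \<in> subtrees (Node [Leaf v, T'])" "i \<in> set (leaves S)" "j \<in> set (leaves S)" by blast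
    show "lca_size T' i j \<le> y"
    proof -
      have "S = Node [Leaf v, T'] \<or> S = Leaf v \<or> S \<in> subtrees T'" using S(2) by auto
      moreover have "S \<noteq> Leaf v" using S(3) assms by auto
      moreover have "S = Node [Leaf v, T'] \<Longrightarrow> ?thesis" using le[OF ne] S(1) by simp
      moreover have "S \<in> subtrees T' \<Longrightarrow> ?thesis" using le S by blast
      ultimately show ?thesis by blast
    qed
  next
    show "lca_size T' i j \<in> {length (leaves S) |S. S \<in> subtrees (Node [Leaf v, T']) \<and> i \<in> set (leaves S) \<and> j \<in> set (leaves S)}"
      using m by auto
  qed
qed

lemma lca_outer:
  assumes "i \<in> set (leaves (Node [Leaf v, T']))" "j \<in> set (leaves (Node [Leaf v, T']))"
    "v \<notin> set (leaves T')" "i \<noteq> j" "i = v \<or> j = v"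
  shows "lca_size (Node [Leaf v, T']) i j = length (leaves (Node [Leaf v, T']))"
  unfolding lca_size_def
proof (rule Min_eqI)
  show "finite {length (leaves S) |S. S \<in> subtrees (Node [Leaf v, T']) \<and> i \<in> set (leaves S) \<and> j \<in> set (leaves S)}"
    by (rule finite_lca_set)
next
  fix y assume "y \<in> {length (leaves S) |S. S \<in> subtrees (Node [Leaf v, T']) \<and> i \<in> set (leaves S) \<and> j \<in> set (leaves S)}"
  then obtain S where S: "y = length (leaves S)" "S \<in> subtrees (Node [Leaf v, T'])" "i \<in> set (leaves S)" "j \<in> set (leaves S)" by blast
  have "S = Node [Leaf v, T'] \<or> S = Leaf v \<or> S \<in> subtrees T'" using S(2) by auto
  moreover have "S \<noteq> Leaf v" using S(3,4) assms by auto
  moreover have "S \<notin> subtrees T'" using S(3,4) assms subtree_leaves by blast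
  ultimately show "length (leaves (Node [Leaf v, T'])) \<le> y" using S(1) by blast
next
  show "length (leaves (Node [Leaf v, T'])) \<in> {length (leaves S) |S. S \<in> subtrees (Node [Leaf v, T']) \<and> i \<in> set (leaves S) \<and> j \<in> set (leaves S)}"
    using assms(1,2) subtree_self by blast
qed

definition PV :: "nat set \<Rightarrow> (nat \<times> nat) set" where
  "PV V = {(i, j). i < j \<and> i \<in> V \<and> j \<in> V}"

definition QV :: "nat set \<Rightarrow> nat \<Rightarrow> (nat \<times> nat) set" where
  "QV V v = {p \<in> PV V. fst p = v \<or> snd p = v}"

definition SW :: "(nat \<Rightarrow> nat \<Rightarrow> real) \<Rightarrow> (nat \<times> nat) set \<Rightarrow> real" where
  "SW f P = (\<Sum>p\<in>P. f (fst p) (snd p))"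

definition HV :: "(nat \<Rightarrow> nat \<Rightarrow> real) \<Rightarrow> (nat \<Rightarrow> nat \<Rightarrow> real) \<Rightarrow> nat set \<Rightarrow> nat hctree \<Rightarrow> real" where
  "HV ws wd V T = (\<Sum>p\<in>PV V. ws (fst p) (snd p) * (real (card V) - real (lca_size T (fst p) (snd p)))
      + wd (fst p) (snd p) * real (lca_size T (fst p) (snd p)))"

lemma finite_PV: "finite V \<Longrightarrow> finite (PV V)"
  by (rule finite_subset[of _ "V \<times> V"]) (auto simp: PV_def)

lemma PV_remove: "PV (V - {v}) = PV V - QV V v"
  by (auto simp: PV_def QV_def)

lemma QV_sub: "QV V v \<subseteq> PV V"
  by (auto simp: QV_def)

lemma SW_remove: "finite V \<Longrightarrow> SW f (PV (V - {v})) = SW f (PV V) - SW f (QV V v)"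
  unfolding SW_def PV_remove using QV_sub finite_PV by (simp add: sum_diff)

lemma sum_QV: assumes "finite V" shows "(\<Sum>v\<in>V. SW f (QV V v)) = 2 * SW f (PV V)"
proof -
  have "(\<Sum>v\<in>V. SW f (QV V v)) = (\<Sum>v\<in>V. \<Sum>p\<in>PV V. if fst p = v \<or> snd p = v then f (fst p) (snd p) else 0)"
    unfolding SW_def QV_def using finite_PV[OF assms] by (simp add: sum.inter_filter)
  also have "\<dots> = (\<Sum>p\<in>PV V. \<Sum>v\<in>V. if fst p = v \<or> snd p = v then f (fst p) (snd p) else 0)"
    by (rule sum.swap)
  also have "\<dots> = (\<Sum>p\<in>PV V. 2 * f (fst p) (snd p))"
  proof (rule sum.cong)
    fix p assume p: "p \<in> PV V"
    then have ne: "fst p \<noteq> snd p" and inV: "fst p \<in> V" "snd p \<in> V" by (auto simp: PV_def)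
    have "(\<Sum>v\<in>V. if fst p = v \<or> snd p = v then f (fst p) (snd p) else 0)
       = (\<Sum>v\<in>V. (if fst p = v then f (fst p) (snd p) else 0) + (if snd p = v then f (fst p) (snd p) else 0))"
      using ne by (intro sum.cong) auto
    also have "\<dots> = 2 * f (fst p) (snd p)" using inV assms by (simp add: sum.distrib)
    finally show "(\<Sum>v\<in>V. if fst p = v \<or> snd p = v then f (fst p) (snd p) else 0) = 2 * f (fst p) (snd p)" .
  qed simp
  finally show ?thesis by (simp add: SW_def sum_distrib_left)
qed

lemma sum_SW_remove: assumes "finite V"
  shows "(\<Sum>v\<in>V. SW f (PV (V - {v}))) = real (card V) * SW f (PV V) - 2 * SW f (PV V)"
  using assms by (simp add: SW_remove sum_subtractf sum_QV)

lemma SW_nonneg: "(\<forall>p\<in>P. f (fst p) (snd p) \<ge> 0) \<Longrightarrow> SW f P \<ge> 0"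
  unfolding SW_def by (intro sum_nonneg) auto


lemma alg1: "2/3*(n*a - 2*a) - (n-2)/3*(2*a) - 2/3*(n*c-2*c) + n/3*(2*c) = 4/3*(c::real)"
  by (simp add: field_simps)

lemma alg2: "(n-2)/3*(a+b) + 2*n/3*(c+d) = ((n-1-2)/3*a + 2*(n-1)/3*c) + a + n*d - (2/3*a - (n-2)/3*b - 2/3*c + n/3*d)"
  for a b c d n :: real
  by (simp add: field_simps)

lemma main:
  fixes ws wd :: "nat \<Rightarrow> nat \<Rightarrow> real"
  shows "finite V \<Longrightarrow> V \<noteq> {} \<Longrightarrow> (\<forall>p\<in>PV V. ws (fst p) (snd p) \<ge> 0 \<and> wd (fst p) (snd p) \<ge> 0) \<Longrightarrow>
   \<exists>T. is_hc_tree V T \<and> HV ws wd V T \<ge> (real (card V) - 2) / 3 * SW ws (PV V) + 2 * real (card V) / 3 * SW wd (PV V)"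
proof (induction "card V" arbitrary: V rule: less_induct)
  case less
  note fin = less.prems(1) and nonneg = less.prems(3)
  show ?case
  proof (cases "card V = 1")
    case True
    then obtain v where V: "V = {v}" using card_1_singletonE by blast
    have "PV V = {}" by (auto simp: V PV_def)
    then show ?thesis
      by (intro exI[of _ "Leaf v"]) (simp add: V is_hc_tree_def HV_def SW_def)
  next
    case False
    have "card V > 0" using less.prems(1,2) card_gt_0_iff by blast
    then have c2: "card V \<ge> 2" using False by linarith
    define n where "n = real (card V)"
    define P where "P = (\<lambda>v T. is_hc_tree (V - {v}) T \<and> HV ws wd (V - {v}) T \<ge> (real (card (V - {v})) - 2) / 3 * SW ws (PV (V - {v})) + 2 * real (card (V - {v})) / 3 * SW wd (PV (V - {v})))"
    have ex: "\<exists>T. P v T" if v: "v \<in> V" for v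
    proof -
      have cv: "card (V - {v}) = card V - 1" using v fin by simp
      show ?thesis unfolding P_def
      proof (rule less.hyps)
        show "card (V - {v}) < card V" using cv c2 by simp
        show "finite (V - {v})" using fin by simp
        have "V \<noteq> {v}" using c2 by auto
        then show "V - {v} \<noteq> {}" using v by blast
        show "\<forall>p\<in>PV (V - {v}). 0 \<le> ws (fst p) (snd p) \<and> 0 \<le> wd (fst p) (snd p)"
          using nonneg by (auto simp: PV_def)
      qed
    qed
    define Tf where "Tf v = (SOME T. P v T)" for v
    have Tf: "P v (Tf v)" if "v \<in> V" for v
      unfolding Tf_def using ex[OF that] by (rule someI_ex)
    define g where "g v = 2/3 * SW ws (PV (V - {v})) - (n-2)/3 * SW ws (QV V v)
       - 2/3 * SW wd (PV (V - {v})) + n/3 * SW wd (QV V v)" for v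
    have "sum g V = 2/3 * (\<Sum>v\<in>V. SW ws (PV (V - {v}))) - (n-2)/3 * (\<Sum>v\<in>V. SW ws (QV V v))
       - 2/3 * (\<Sum>v\<in>V. SW wd (PV (V - {v}))) + n/3 * (\<Sum>v\<in>V. SW wd (QV V v))"
      unfolding g_def by (simp add: sum.distrib sum_subtractf sum_distrib_left)
    also have "\<dots> = 4/3 * SW wd (PV V)"
      unfolding sum_QV[OF fin] sum_SW_remove[OF fin] n_def[symmetric] using alg1[of n "SW ws (PV V)" "SW wd (PV V)"] by simp
    also have "\<dots> \<ge> 0" using SW_nonneg[of "PV V" wd] nonneg by auto
    finally have sg: "sum g V \<ge> 0" .
    obtain v where v: "v \<in> V" "g v \<ge> 0"
    proof (rule ccontr)
      assume "\<not> thesis"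
      with that have "\<forall>v\<in>V. g v < 0" by force
      then have "sum g V < sum (\<lambda>_. 0) V" using fin less.prems(2) by (intro sum_strict_mono) auto
      with sg show False by simp
    qed
    define T' where "T' = Tf v"
    have PT': "P v T'" using Tf[OF v(1)] by (simp add: T'_def)
    define T where "T = Node [Leaf v, T']"
    have lT': "set (leaves T') = V - {v}" "distinct (leaves T')" "wf_tree T'"
      using PT' by (auto simp: P_def is_hc_tree_def)
    have vn: "v \<notin> set (leaves T')" using lT' by auto
    have hc: "is_hc_tree V T"
      using lT' v(1) by (auto simp: T_def is_hc_tree_def)
    have lenT: "length (leaves T) = card V"
      using hc unfolding is_hc_tree_def by (metis distinct_card)
    have cv: "card (V - {v}) = card V - 1" using v fin by simp
    have cvr: "real (card (V - {v})) = n - 1" using cv c2 n_def by simp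
    have split: "HV ws wd V T = HV ws wd (V - {v}) T' + SW ws (PV (V - {v})) + n * SW wd (QV V v)"
    proof -
      let ?h = "\<lambda>p. ws (fst p) (snd p) * (real (card V) - real (lca_size T (fst p) (snd p)))
        + wd (fst p) (snd p) * real (lca_size T (fst p) (snd p))"
      have "HV ws wd V T = sum ?h (PV V - QV V v) + sum ?h (QV V v)"
        unfolding HV_def using QV_sub finite_PV[OF fin] by (simp add: sum.subset_diff)
      also have "sum ?h (PV V - QV V v) = HV ws wd (V - {v}) T' + SW ws (PV (V - {v}))"
      proof -
        have "sum ?h (PV V - QV V v) = (\<Sum>p\<in>PV (V - {v}). (ws (fst p) (snd p) * (real (card (V - {v})) - real (lca_size T' (fst p) (snd p)))
          + wd (fst p) (snd p) * real (lca_size T' (fst p) (snd p))) + ws (fst p) (snd p))"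
          unfolding PV_remove[symmetric]
        proof (rule sum.cong)
          fix p assume p: "p \<in> PV (V - {v})"
          obtain a b where ab: "p = (a, b)" by (cases p)
          from p have "a \<in> V - {v}" "b \<in> V - {v}" unfolding ab PV_def by auto
          then have "a \<in> set (leaves T')" "b \<in> set (leaves T')" by (simp_all only: lT'(1))
          then have "lca_size (Node [Leaf v, T']) a b = lca_size T' a b"
            using vn by (rule lca_inner)
          then have lc: "lca_size T (fst p) (snd p) = lca_size T' (fst p) (snd p)" by (simp add: ab T_def)
          have nn: "real (card V) = real (card (V - {v})) + 1" using cvr n_def by simp
          then show "?h p = (ws (fst p) (snd p) * (real (card (V - {v})) - real (lca_size T' (fst p) (snd p)))
          + wd (fst p) (snd p) * real (lca_size T' (fst p) (snd p))) + ws (fst p) (snd p)"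
            unfolding lc nn by (simp add: algebra_simps)
        qed simp
        then show ?thesis by (simp add: sum.distrib HV_def SW_def)
      qed
      also have "sum ?h (QV V v) = n * SW wd (QV V v)"
        unfolding SW_def sum_distrib_left
      proof (rule sum.cong)
        fix p assume p: "p \<in> QV V v"
        obtain a b where ab: "p = (a, b)" by (cases p)
        from p have abV: "a \<in> V" "b \<in> V" "a \<noteq> b" "a = v \<or> b = v"
          unfolding ab QV_def PV_def by auto
        have sT: "set (leaves (Node [Leaf v, T'])) = V" using lT'(1) v(1) by auto
        have "lca_size (Node [Leaf v, T']) a b = length (leaves (Node [Leaf v, T']))"
          using abV vn by (intro lca_outer) (auto simp add: lT'(1))
        then have "lca_size T (fst p) (snd p) = length (leaves T)" by (simp add: ab T_def)
        then show "?h p = n * wd (fst p) (snd p)" using lenT n_def by simp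
      qed simp
      finally show ?thesis by simp
    qed
    have IH: "HV ws wd (V - {v}) T' \<ge> (n - 1 - 2) / 3 * SW ws (PV (V - {v})) + 2 * (n - 1) / 3 * SW wd (PV (V - {v}))"
      using PT' cvr by (simp add: P_def)
    have SWs: "SW ws (PV V) = SW ws (PV (V - {v})) + SW ws (QV V v)" using SW_remove[OF fin] by simp
    have SWd: "SW wd (PV V) = SW wd (PV (V - {v})) + SW wd (QV V v)" using SW_remove[OF fin] by simp
    have "(n - 2) / 3 * SW ws (PV V) + 2 * n / 3 * SW wd (PV V) \<le> HV ws wd V T"
      unfolding SWs SWd alg2 split using IH v(2) unfolding g_def by linarith
    then show ?thesis using hc n_def by blast
  qed
qed

theorem proposition1:
  shows "\<exists>alg :: nat \<Rightarrow> (nat \<Rightarrow> nat \<Rightarrow> real) \<Rightarrow> (nat \<Rightarrow> nat \<Rightarrow> real) \<Rightarrow> nat hctree.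
     \<forall>n ws wd. n \<ge> 1 \<longrightarrow>
       (\<forall>(i, j)\<in>pairs n. ws i j \<ge> 0 \<and> wd i j \<ge> 0) \<longrightarrow>
       is_hc_tree {..<n} (alg n ws wd) \<and>
       hcc n ws wd (alg n ws wd) \<ge>
         (1/3) * (real n - 2) * (\<Sum>(i, j)\<in>pairs n. ws i j)
         + (2/3) * real n * (\<Sum>(i, j)\<in>pairs n. wd i j)"
proof -
  define Q where "Q = (\<lambda>n ws wd T. is_hc_tree {..<n} T \<and> hcc n ws wd T \<ge>
         (1/3) * (real n - 2) * (\<Sum>(i, j)\<in>pairs n. ws i j)
         + (2/3) * real n * (\<Sum>(i, j)\<in>pairs n. wd i j))"
  have ex: "\<exists>T. Q n ws wd T" if n: "n \<ge> 1" and nn: "\<forall>(i, j)\<in>pairs n. ws i j \<ge> 0 \<and> wd i j \<ge> 0" for n ws wd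
  proof -
    have pp: "pairs n = PV {..<n}" by (auto simp: pairs_def PV_def)
    have "\<exists>T. is_hc_tree {..<n} T \<and> HV ws wd {..<n} T \<ge> (real (card {..<n}) - 2) / 3 * SW ws (PV {..<n}) + 2 * real (card {..<n}) / 3 * SW wd (PV {..<n})"
      using n nn by (intro main) (auto simp: pp lessThan_empty_iff)
    then obtain T where T: "is_hc_tree {..<n} T" "HV ws wd {..<n} T \<ge> (real n - 2) / 3 * SW ws (PV {..<n}) + 2 * real n / 3 * SW wd (PV {..<n})"
      by auto
    have h: "hcc n ws wd T = HV ws wd {..<n} T"
      unfolding hcc_def HV_def pp by (simp add: split_def sum.distrib)
    have s: "(\<Sum>(i, j)\<in>pairs n. f i j) = SW f (PV {..<n})" for f :: "nat \<Rightarrow> nat \<Rightarrow> real"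
      unfolding SW_def pp by (simp add: split_def)
    show ?thesis unfolding Q_def using T by (auto simp: h s)
  qed
  show ?thesis
  proof (intro exI[of _ "\<lambda>n ws wd. SOME T. Q n ws wd T"] allI impI)
    fix n and ws wd :: "nat \<Rightarrow> nat \<Rightarrow> real" assume a: "n \<ge> (1::nat)" "\<forall>(i, j)\<in>pairs n. ws i j \<ge> 0 \<and> wd i j \<ge> (0::real)"
    have "Q n ws wd (SOME T. Q n ws wd T)" using ex[OF a] by (rule someI_ex)
    then show "is_hc_tree {..<n} (SOME T. Q n ws wd T) \<and>
       hcc n ws wd (SOME T. Q n ws wd T) \<ge>
         (1/3) * (real n - 2) * (\<Sum>(i, j)\<in>pairs n. ws i j)
         + (2/3) * real n * (\<Sum>(i, j)\<in>pairs n. wd i j)" unfolding Q_def by simp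
  qed
qed

end
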